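(* Let $F$ be a field with $\mathrm{char}\,F\neq 2$ and let $n>1$ be an integer. Let $I_n$ be the $F$-algebra defined in the context. Then the automorphism group of $I_n$ is isomorphic to the orthogonal group $O_{n-1}(F)=\{A\in M_{n-1}(F)\mid AA^T=A^TA=E\}$, and the Lie algebra of derivations of $I_n$ is isomorphic to the orthogonal Lie algebra $\mathfrak{o}_{n-1}(F)=\{A\in M_{n-1}(F)\mid A^T=-A\}$.
   Context: $I_n$ denotes the $n$-dimensional (non-associative) algebra over $F$ with basis $e_1,\ldots,e_n$ and multiplication given by $e_n\cdot e_n=2e_n$, $e_n\cdot e_j=e_j$, $e_j\cdot e_j=e_n$ for $j=1,\ldots,n-1$, with all other products of basis elements equal to zero (extended bilinearly). It is a pre-Lie algebra, i.e. $(xy)z-x(yz)=(yx)z-y(xz)$ for all $x,y,z$. A derivation is a linear map $d$ with $d(xy)=d(x)y+xd(y)$. $E$ denotes the identity matrix. *)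

theory Defs
  imports "Jordan_Normal_Form.Matrix" "HOL-Algebra.Group"
begin

text \<open>Structure constants of I_n w.r.t. the basis e_1,...,e_n, indexed 0-based:
  e_(i+1) has index i, so the distinguished element e_n has index n-1.
  ic n i j k is the coefficient of e_k in e_i * e_j.\<close>
definition ic :: "nat \<Rightarrow> nat \<Rightarrow> nat \<Rightarrow> nat \<Rightarrow> 'a::field" where
  "ic n i j k =
     (if i = n - 1 \<and> j = n - 1 then (if k = n - 1 then 2 else 0)
      else if i = n - 1 \<and> j < n - 1 then (if k = j then 1 else 0)
      else if i < n - 1 \<and> j = i then (if k = n - 1 then 1 else 0)
      else 0)"

definition imul :: "nat \<Rightarrow> 'a::field vec \<Rightarrow> 'a vec \<Rightarrow> 'a vec" where
  "imul n x y = vec n (\<lambda>k. \<Sum>i<n. \<Sum>j<n. x $ i * y $ j * ic n i j k)"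

definition is_aut :: "nat \<Rightarrow> 'a::field mat \<Rightarrow> bool" where
  "is_aut n A \<longleftrightarrow> A \<in> carrier_mat n n \<and> invertible_mat A \<and>
     (\<forall>x \<in> carrier_vec n. \<forall>y \<in> carrier_vec n. A *\<^sub>v imul n x y = imul n (A *\<^sub>v x) (A *\<^sub>v y))"

definition is_der :: "nat \<Rightarrow> 'a::field mat \<Rightarrow> bool" where
  "is_der n D \<longleftrightarrow> D \<in> carrier_mat n n \<and>
     (\<forall>x \<in> carrier_vec n. \<forall>y \<in> carrier_vec n.
        D *\<^sub>v imul n x y = imul n (D *\<^sub>v x) y + imul n x (D *\<^sub>v y))"

definition aut_group :: "nat \<Rightarrow> 'a::field mat monoid" where
  "aut_group n = \<lparr>carrier = {A. is_aut n A}, mult = (\<lambda>A B. A * B), one = 1\<^sub>m n\<rparr>"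

definition orth_group :: "nat \<Rightarrow> 'a::field mat monoid" where
  "orth_group m = \<lparr>carrier = {A \<in> carrier_mat m m. A * transpose_mat A = 1\<^sub>m m \<and> transpose_mat A * A = 1\<^sub>m m},
                   mult = (\<lambda>A B. A * B), one = 1\<^sub>m m\<rparr>"

definition der_alg :: "nat \<Rightarrow> 'a::field mat set" where
  "der_alg n = {D. is_der n D}"

definition orth_lie :: "nat \<Rightarrow> 'a::field mat set" where
  "orth_lie m = {A \<in> carrier_mat m m. transpose_mat A = - A}"

definition lie_bracket :: "'a::field mat \<Rightarrow> 'a mat \<Rightarrow> 'a mat" where
  "lie_bracket A B = A * B - B * A"

definition lie_isomorphic :: "'a::field mat set \<Rightarrow> 'a mat set \<Rightarrow> bool" where
  "lie_isomorphic L M \<longleftrightarrow> (\<exists>\<phi>. bij_betw \<phi> L M \<and>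
     (\<forall>A \<in> L. \<forall>B \<in> L. \<phi> (A + B) = \<phi> A + \<phi> B \<and>
                        \<phi> (lie_bracket A B) = lie_bracket (\<phi> A) (\<phi> B)) \<and>
     (\<forall>c. \<forall>A \<in> L. \<phi> (c \<cdot>\<^sub>m A) = c \<cdot>\<^sub>m \<phi> A))"

end

theory Submission imports Defs "Jordan_Normal_Form.Determinant" begin

lemma ic_Suc: "ic (Suc m) i j k =
     (if i = m \<and> j = m then (if k = m then 2 else 0)
      else if i = m \<and> j < m then (if k = j then 1 else 0)
      else if i < m \<and> j = i then (if k = m then 1 else 0)
      else 0)"
  by (simp add: ic_def)

lemma imul_lt:
  assumes "k < m"
  shows "imul (Suc m) x y $ k = (x $ m * y $ k :: 'a::field)"
proof -
  have "imul (Suc m) x y $ k = (\<Sum>i<Suc m. \<Sum>j<Suc m. x $ i * y $ j * ic (Suc m) i j k)"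
    using assms by (simp add: imul_def)
  also have "\<dots> = (\<Sum>j<Suc m. x $ m * y $ j * ic (Suc m) m j k)"
    using assms by (simp add: ic_Suc)
  also have "\<dots> = (\<Sum>j<Suc m. if j = k then x $ m * y $ k else 0)"
    using assms by (intro sum.cong) (auto simp: ic_Suc)
  also have "\<dots> = x $ m * y $ k"
    using assms by simp
  finally show ?thesis .
qed

lemma imul_m:
  shows "imul (Suc m) x y $ m = 2 * x $ m * y $ m + (\<Sum>i<m. x $ i * y $ i :: 'a::field)"
proof -
  have "imul (Suc m) x y $ m = (\<Sum>i<Suc m. \<Sum>j<Suc m. x $ i * y $ j * ic (Suc m) i j m)"
    by (simp add: imul_def)
  also have "\<dots> = (\<Sum>i<m. \<Sum>j<Suc m. x $ i * y $ j * ic (Suc m) i j m) + (\<Sum>j<Suc m. x $ m * y $ j * ic (Suc m) m j m)"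
    by simp
  also have "(\<Sum>j<Suc m. x $ m * y $ j * ic (Suc m) m j m) = 2 * x $ m * y $ m"
    by (simp add: ic_Suc)
  also have "(\<Sum>i<m. \<Sum>j<Suc m. x $ i * y $ j * ic (Suc m) i j m) = (\<Sum>i<m. x $ i * y $ i)"
    by (rule sum.cong, simp, simp add: ic_Suc if_distrib cong: if_cong)
  finally show ?thesis by simp
qed

lemma dim_imul: "dim_vec (imul n x y) = n"
  by (simp add: imul_def)

lemma imul_carrier: "imul n x y \<in> carrier_vec n"
  by (rule carrier_vecI) (rule dim_imul)

lemma mult_unit:
  fixes A :: "'a::field mat"
  assumes "A \<in> carrier_mat n n" "j < n"
  shows "A *\<^sub>v unit_vec n j = col A (j::nat)"
  using assms by (intro eq_vecI) auto

lemma ifmult: "((if P then 1 else 0) * (if Q then 1 else 0) :: 'a::field) = (if P \<and> Q then 1 else 0)"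
  by simp

lemma sum_delta_sq: "j < (m::nat) \<Longrightarrow> (\<Sum>i<m. if i = j \<and> i = j then 1 else 0 :: 'a::field) = 1"
  by (simp add: sum.delta)

lemma sum_delta_ne: "i \<noteq> (j::nat) \<Longrightarrow> (\<Sum>l<m. if l = i \<and> l = j then 1 else 0 :: 'a::field) = 0"
  by (intro sum.neutral) auto

lemma imul_unit_mm: "imul (Suc m) (unit_vec (Suc m) m) (unit_vec (Suc m) m) = (2::'a::field) \<cdot>\<^sub>v unit_vec (Suc m) m"
proof (intro eq_vecI)
  fix k assume "k < dim_vec ((2::'a) \<cdot>\<^sub>v unit_vec (Suc m) m)"
  then have "k < m \<or> k = m" by auto
  then show "imul (Suc m) (unit_vec (Suc m) m) (unit_vec (Suc m) m) $ k = ((2::'a) \<cdot>\<^sub>v unit_vec (Suc m) m) $ k"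
    by (auto simp: imul_lt imul_m ifmult sum_delta_ne sum_delta_sq simp del: conj_absorb)
qed (simp add: imul_def)

lemma imul_unit_mj: "j < m \<Longrightarrow> imul (Suc m) (unit_vec (Suc m) m) (unit_vec (Suc m) j) = (unit_vec (Suc m) j :: 'a::field vec)"
proof (intro eq_vecI)
  fix k assume "j < m" "k < dim_vec (unit_vec (Suc m) j :: 'a vec)"
  then have "k < m \<or> k = m" by auto
  then show "imul (Suc m) (unit_vec (Suc m) m) (unit_vec (Suc m) j) $ k = (unit_vec (Suc m) j :: 'a vec) $ k"
    using \<open>j < m\<close> by (auto simp: imul_lt imul_m ifmult sum_delta_ne sum_delta_sq simp del: conj_absorb)
qed (simp add: imul_def)

lemma imul_unit_jj: "j < m \<Longrightarrow> imul (Suc m) (unit_vec (Suc m) j) (unit_vec (Suc m) j) = (unit_vec (Suc m) m :: 'a::field vec)"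
proof (intro eq_vecI)
  fix k assume "j < m" "k < dim_vec (unit_vec (Suc m) m :: 'a vec)"
  then have "k < m \<or> k = m" by auto
  then show "imul (Suc m) (unit_vec (Suc m) j) (unit_vec (Suc m) j) $ k = (unit_vec (Suc m) m :: 'a vec) $ k"
    using \<open>j < m\<close> by (auto simp: imul_lt imul_m ifmult sum_delta_ne sum_delta_sq simp del: conj_absorb)
qed (simp add: imul_def)

lemma imul_unit_ij: "i < m \<Longrightarrow> j < m \<Longrightarrow> i \<noteq> j \<Longrightarrow> imul (Suc m) (unit_vec (Suc m) i) (unit_vec (Suc m) j) = (0\<^sub>v (Suc m) :: 'a::field vec)"
proof (intro eq_vecI)
  fix k assume "i < m" "j < m" "i \<noteq> j" "k < dim_vec (0\<^sub>v (Suc m) :: 'a vec)"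
  then have "k < m \<or> k = m" by auto
  then show "imul (Suc m) (unit_vec (Suc m) i) (unit_vec (Suc m) j) $ k = (0\<^sub>v (Suc m) :: 'a vec) $ k"
    using \<open>i < m\<close> \<open>j < m\<close> \<open>i \<noteq> j\<close> by (auto simp: imul_lt imul_m ifmult sum_delta_ne sum_delta_sq simp del: conj_absorb)
qed (simp add: imul_def)

lemma imul_m_gen:
  assumes "x \<in> carrier_vec (Suc m)" "y \<in> carrier_vec (Suc m)"
  shows "imul (Suc m) x y $ m = x $ m * y $ m + (x \<bullet> y :: 'a::field)"
  using assms by (simp add: imul_m scalar_prod_def atLeast0LessThan)

lemma imul_col_m:
  assumes "A \<in> carrier_mat (Suc m) (Suc m)" "B \<in> carrier_mat (Suc m) (Suc m)" "i < Suc m" "j < Suc m"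
  shows "imul (Suc m) (col A i) (col B j) $ m = 2 * A $$ (m,i) * B $$ (m,j) + (\<Sum>l<m. A $$ (l,i) * B $$ (l,j) :: 'a::field)"
  using assms by (simp add: imul_m)

lemma mult_zero_v:
  fixes A :: "'a::field mat"
  shows "A \<in> carrier_mat n n \<Longrightarrow> A *\<^sub>v 0\<^sub>v n = 0\<^sub>v n"
  by (intro eq_vecI) auto

definition orthc :: "nat \<Rightarrow> 'a::field mat \<Rightarrow> bool" where
  "orthc n A \<longleftrightarrow> (\<forall>i<n. \<forall>j<n. (\<Sum>k<n. A $$ (k,i) * A $$ (k,j)) = (if i = j then 1 else 0))"

definition blk :: "nat \<Rightarrow> 'a::field mat \<Rightarrow> bool" where
  "blk m A \<longleftrightarrow> (\<forall>j<m. A $$ (m,j) = 0 \<and> A $$ (j,m) = 0) \<and> A $$ (m,m) = 1"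

lemma aut_nec:
  fixes A :: "'a::field mat"
  assumes two: "(2::'a) \<noteq> 0" and m: "0 < m" and A: "is_aut (Suc m) A"
  shows "orthc (Suc m) A \<and> blk m A"
proof -
  from A have Ac: "A \<in> carrier_mat (Suc m) (Suc m)" and inv: "invertible_mat A"
    and hom: "\<And>x y. x \<in> carrier_vec (Suc m) \<Longrightarrow> y \<in> carrier_vec (Suc m) \<Longrightarrow>
       A *\<^sub>v imul (Suc m) x y = imul (Suc m) (A *\<^sub>v x) (A *\<^sub>v y)"
    unfolding is_aut_def by auto
  let ?u = "unit_vec (Suc m)"
  have ent: "(A *\<^sub>v imul (Suc m) (?u i) (?u j)) $ k = imul (Suc m) (col A i) (col A j) $ k"
    if "i < Suc m" "j < Suc m" for i j k
    using hom[of "?u i" "?u j"] mult_unit[OF Ac] that by simp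
  have F1: "2 * A $$ (k,m) = A $$ (m,m) * A $$ (k,m)" if k: "k < m" for k
    using ent[of m m k] k Ac by (simp add: imul_unit_mm mult_mat_vec mult_unit imul_lt)
  have F1m: "2 * A $$ (m,m) = 2 * A $$ (m,m) * A $$ (m,m) + (\<Sum>l<m. A $$ (l,m) * A $$ (l,m))"
    using ent[of m m m] Ac by (simp add: imul_unit_mm mult_mat_vec mult_unit imul_col_m)
  have F2: "A $$ (k,j) = A $$ (m,m) * A $$ (k,j)" if "j < m" "k < m" for j k
    using ent[of m j k] that Ac by (simp add: imul_unit_mj mult_unit imul_lt)
  have F2m: "A $$ (m,j) = 2 * A $$ (m,m) * A $$ (m,j) + (\<Sum>l<m. A $$ (l,m) * A $$ (l,j))" if "j < m" for j
    using ent[of m j m] that Ac by (simp add: imul_unit_mj mult_unit imul_col_m)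
  have F3: "A $$ (k,m) = A $$ (m,j) * A $$ (k,j)" if "j < m" "k < m" for j k
    using ent[of j j k] that Ac by (simp add: imul_unit_jj mult_unit imul_lt)
  have F3m: "A $$ (m,m) = 2 * A $$ (m,j) * A $$ (m,j) + (\<Sum>l<m. A $$ (l,j) * A $$ (l,j))" if "j < m" for j
    using ent[of j j m] that Ac by (simp add: imul_unit_jj mult_unit imul_col_m)
  have F4m: "0 = 2 * A $$ (m,i) * A $$ (m,j) + (\<Sum>l<m. A $$ (l,i) * A $$ (l,j))" if "i < m" "j < m" "i \<noteq> j" for i j
    using ent[of i j m] that Ac by (simp add: imul_unit_ij mult_zero_v imul_col_m)
  have c1: "A $$ (m,m) = 1"
  proof (rule ccontr)
    assume c: "A $$ (m,m) \<noteq> 1"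
    have z1: "A $$ (k,j) = 0" if "k < m" "j < m" for k j
      using F2[OF that(2) that(1)] c by (metis mult_cancel_right2)
    have z2: "A $$ (k,m) = 0" if "k < m" for k
      using F3[of 0 k] z1[of k 0] m that by simp
    have "2 * A $$ (m,m) = 2 * A $$ (m,m) * A $$ (m,m)" using F1m z2 by simp
    then have "A $$ (m,m) = A $$ (m,m) * A $$ (m,m)" using two by simp
    then have c0: "A $$ (m,m) = 0" using c by (metis mult_cancel_right2)
    have colz: "A *\<^sub>v ?u m = 0\<^sub>v (Suc m)"
    proof (intro eq_vecI)
      fix k assume "k < dim_vec (0\<^sub>v (Suc m) :: 'a vec)"
      then have "k < m \<or> k = m" by auto
      then show "(A *\<^sub>v ?u m) $ k = 0\<^sub>v (Suc m) $ k"
        using Ac z2 c0 by (auto simp: mult_unit)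
    qed (use Ac in simp)
    obtain B where AB: "A * B = 1\<^sub>m (Suc m)" and BA: "B * A = 1\<^sub>m (dim_row B)"
      using inv Ac unfolding invertible_mat_def inverts_mat_def by auto
    have "dim_col B = Suc m" using AB by (metis index_mult_mat(3) index_one_mat(3))
    moreover have "dim_row B = Suc m" using BA Ac by (metis carrier_matD(2) index_mult_mat(3) index_one_mat(3))
    ultimately have Bc: "B \<in> carrier_mat (Suc m) (Suc m)" by auto
    have "?u m = (B * A) *\<^sub>v ?u m" using BA Bc by simp
    also have "\<dots> = B *\<^sub>v (A *\<^sub>v ?u m)" using Ac Bc by simp
    also have "\<dots> = 0\<^sub>v (Suc m)" using colz Bc by (simp add: mult_zero_v)
    finally have "?u m $ m = (0\<^sub>v (Suc m) :: 'a vec) $ m" by simp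
    then show False by simp
  qed
  have two1: "(2::'a) \<noteq> 1" by (metis one_add_one add_cancel_left_right one_neq_zero)
  have a1: "A $$ (k,m) = 0" if "k < m" for k using F1[OF that] c1 two1 by simp
  have a2: "A $$ (m,j) = 0" if "j < m" for j using F2m[OF that] c1 a1 two1 by simp
  have "orthc (Suc m) A"
    unfolding orthc_def
  proof (intro allI impI)
    fix i j assume i: "i < Suc m" and j: "j < Suc m"
    have "(\<Sum>k<Suc m. A $$ (k,i) * A $$ (k,j)) = (\<Sum>k<m. A $$ (k,i) * A $$ (k,j)) + A $$ (m,i) * A $$ (m,j)"
      by simp
    also have "\<dots> = (if i = j then 1 else 0)"
    proof -
      consider "i = m" "j = m" | "i = m" "j < m" | "i < m" "j = m" | "i < m" "j < m" "i = j" | "i < m" "j < m" "i \<noteq> j"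
        using i j by linarith
      then show ?thesis
      proof cases
        case 1 then show ?thesis using a1 c1 by simp
      next
        case 2 then show ?thesis using a1 a2 by simp
      next
        case 3 then show ?thesis using a1 a2 by simp
      next
        case 4 then show ?thesis using F3m[of j] a2 c1 by simp
      next
        case 5 then show ?thesis using F4m[of i j] a2 by simp
      qed
    qed
    finally show "(\<Sum>k<Suc m. A $$ (k,i) * A $$ (k,j)) = (if i = j then 1 else 0)" .
  qed
  moreover have "blk m A" unfolding blk_def using a1 a2 c1 by auto
  ultimately show ?thesis by simp
qed

lemma Av_lt:
  fixes A :: "'a::field mat"
  assumes Ac: "A \<in> carrier_mat (Suc m) (Suc m)" and b: "blk m A" and k: "k < m" and v: "v \<in> carrier_vec (Suc m)"
  shows "(A *\<^sub>v v) $ k = (\<Sum>l<m. A $$ (k,l) * v $ l)"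
proof -
  have "(A *\<^sub>v v) $ k = (\<Sum>l<Suc m. A $$ (k,l) * v $ l)"
    using Ac k v by (simp add: scalar_prod_def atLeast0LessThan)
  also have "\<dots> = (\<Sum>l<m. A $$ (k,l) * v $ l)" using b k by (simp add: blk_def)
  finally show ?thesis .
qed

lemma Av_m:
  fixes A :: "'a::field mat"
  assumes Ac: "A \<in> carrier_mat (Suc m) (Suc m)" and b: "blk m A" and v: "v \<in> carrier_vec (Suc m)"
  shows "(A *\<^sub>v v) $ m = v $ m"
proof -
  have "(A *\<^sub>v v) $ m = (\<Sum>l<Suc m. A $$ (m,l) * v $ l)"
    using Ac v by (simp add: scalar_prod_def atLeast0LessThan)
  also have "\<dots> = v $ m" using b by (simp add: blk_def)
  finally show ?thesis .
qed

lemma orthc_TA: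
  fixes A :: "'a::field mat"
  assumes Ac: "A \<in> carrier_mat n n"
  shows "orthc n A \<longleftrightarrow> transpose_mat A * A = 1\<^sub>m n"
proof -
  have e: "(transpose_mat A * A) $$ (i,j) = (\<Sum>k<n. A $$ (k,i) * A $$ (k,j))" if "i < n" "j < n" for i j
    using Ac that by (simp add: scalar_prod_def atLeast0LessThan)
  show ?thesis
  proof
    assume "orthc n A"
    then show "transpose_mat A * A = 1\<^sub>m n"
      using Ac e unfolding orthc_def by (intro eq_matI) auto
  next
    assume "transpose_mat A * A = 1\<^sub>m n"
    then show "orthc n A" using e unfolding orthc_def by (metis index_one_mat(1))
  qed
qed

lemma aut_suff:
  fixes A :: "'a::field mat"
  assumes Ac: "A \<in> carrier_mat (Suc m) (Suc m)" and o: "orthc (Suc m) A" and b: "blk m A"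
  shows "is_aut (Suc m) A"
proof -
  have TA: "transpose_mat A * A = 1\<^sub>m (Suc m)" using orthc_TA[OF Ac] o by simp
  have ATc: "transpose_mat A \<in> carrier_mat (Suc m) (Suc m)" using Ac by simp
  have AT: "A * transpose_mat A = 1\<^sub>m (Suc m)" by (rule mat_mult_left_right_inverse[OF ATc Ac TA])
  have inv: "invertible_mat A"
    unfolding invertible_mat_def inverts_mat_def using Ac AT TA ATc
    by (intro conjI exI[of _ "transpose_mat A"]) (auto simp: square_mat.simps)
  have hom: "A *\<^sub>v imul (Suc m) x y = imul (Suc m) (A *\<^sub>v x) (A *\<^sub>v y)"
    if x: "x \<in> carrier_vec (Suc m)" and y: "y \<in> carrier_vec (Suc m)" for x y
  proof (intro eq_vecI)
    have ic: "imul (Suc m) x y \<in> carrier_vec (Suc m)" by (simp add: imul_def)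
    have Axc: "A *\<^sub>v x \<in> carrier_vec (Suc m)" "A *\<^sub>v y \<in> carrier_vec (Suc m)" using Ac x y by auto
    fix k assume "k < dim_vec (imul (Suc m) (A *\<^sub>v x) (A *\<^sub>v y))"
    then have "k < m \<or> k = m" by (auto simp: imul_def)
    then show "(A *\<^sub>v imul (Suc m) x y) $ k = imul (Suc m) (A *\<^sub>v x) (A *\<^sub>v y) $ k"
    proof
      assume k: "k < m"
      have "(A *\<^sub>v imul (Suc m) x y) $ k = (\<Sum>l<m. A $$ (k,l) * (x $ m * y $ l))"
        using Av_lt[OF Ac b k ic] by (simp add: imul_lt)
      also have "\<dots> = x $ m * (\<Sum>l<m. A $$ (k,l) * y $ l)"
        by (simp add: sum_distrib_left ac_simps)
      also have "\<dots> = imul (Suc m) (A *\<^sub>v x) (A *\<^sub>v y) $ k"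
        using Av_lt[OF Ac b k y] Av_m[OF Ac b x] k by (simp add: imul_lt)
      finally show ?thesis .
    next
      assume k: "k = m"
      have sp: "(A *\<^sub>v x) \<bullet> (A *\<^sub>v y) = x \<bullet> y"
      proof -
        have "(A *\<^sub>v x) \<bullet> (A *\<^sub>v y) = (transpose_mat A *\<^sub>v (A *\<^sub>v x)) \<bullet> y"
          using transpose_vec_mult_scalar[OF Ac y Axc(1)] by simp
        also have "transpose_mat A *\<^sub>v (A *\<^sub>v x) = x"
          using TA ATc Ac x by (metis assoc_mult_mat_vec one_mult_mat_vec)
        finally show ?thesis .
      qed
      show ?thesis using k imul_m_gen[OF x y] imul_m_gen[OF Axc] sp Av_m[OF Ac b x] Av_m[OF Ac b y] Av_m[OF Ac b ic]
        by simp
    qed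
  qed (use Ac in \<open>simp add: imul_def\<close>)
  show ?thesis unfolding is_aut_def using Ac inv hom by blast
qed

lemma sum_unit_r: "j < (m::nat) \<Longrightarrow> (\<Sum>i<m. f i * (if i = j then 1 else 0)) = (f j :: 'a::field)"
proof -
  assume j: "j < m"
  have "(\<Sum>i<m. f i * (if i = j then 1 else 0)) = (\<Sum>i<m. if i = j then f i else 0)"
    by (rule sum.cong) auto
  then show ?thesis using j by simp
qed

lemma sum_unit_l: "j < (m::nat) \<Longrightarrow> (\<Sum>i<m. (if i = j then 1 else 0) * f i) = (f j :: 'a::field)"
proof -
  assume j: "j < m"
  have "(\<Sum>i<m. (if i = j then 1 else 0) * f i) = (\<Sum>i<m. if i = j then f i else 0)"
    by (rule sum.cong) auto
  then show ?thesis using j by simp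
qed

definition skb :: "nat \<Rightarrow> 'a::field mat \<Rightarrow> bool" where
  "skb m D \<longleftrightarrow> (\<forall>i<Suc m. \<forall>j<Suc m. D $$ (j,i) = - D $$ (i,j)) \<and> (\<forall>j<Suc m. D $$ (m,j) = 0 \<and> D $$ (j,m) = 0)"

lemma der_nec:
  fixes D :: "'a::field mat"
  assumes two: "(2::'a) \<noteq> 0" and Dd: "is_der (Suc m) D"
  shows "skb m D"
proof -
  from Dd have Dc: "D \<in> carrier_mat (Suc m) (Suc m)"
    and hom: "\<And>x y. x \<in> carrier_vec (Suc m) \<Longrightarrow> y \<in> carrier_vec (Suc m) \<Longrightarrow>
       D *\<^sub>v imul (Suc m) x y = imul (Suc m) (D *\<^sub>v x) y + imul (Suc m) x (D *\<^sub>v y)"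
    unfolding is_der_def by auto
  let ?u = "unit_vec (Suc m)"
  have ent: "(D *\<^sub>v imul (Suc m) (?u i) (?u j)) $ k = imul (Suc m) (col D i) (?u j) $ k + imul (Suc m) (?u i) (col D j) $ k"
    if "i < Suc m" "j < Suc m" "k < Suc m" for i j k
    using hom[of "?u i" "?u j"] mult_unit[OF Dc] that by (simp add: imul_def)
  have two1: "(2::'a) \<noteq> 1" by (metis one_add_one add_cancel_left_right one_neq_zero)
  have G1: "2 * D $$ (k,m) = D $$ (k,m)" if k: "k < m" for k
    using ent[of m m k] k Dc by (simp add: imul_unit_mm mult_mat_vec mult_unit imul_lt)
  have a1: "D $$ (k,m) = 0" if "k < m" for k using G1[OF that] two1 by simp
  have G1m: "2 * D $$ (m,m) = 4 * D $$ (m,m)"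
    using ent[of m m m] Dc by (simp add: imul_unit_mm mult_mat_vec mult_unit imul_m)
  have "(4::'a) = 2 + 2" by simp
  then have two4: "(2::'a) \<noteq> 4" using two by (metis add_cancel_left_right)
  have a0: "D $$ (m,m) = 0" using G1m two4 by simp
  have G2m: "D $$ (m,j) = D $$ (j,m) + 2 * D $$ (m,j)" if "j < m" for j
    using ent[of m j m] that Dc by (simp add: imul_unit_mj mult_unit imul_m sum_unit_r sum_unit_l)
  have a2: "D $$ (m,j) = 0" if "j < m" for j using G2m[OF that] a1[OF that] two1 by simp
  have G4m: "0 = D $$ (j,i) + D $$ (i,j)" if "i < m" "j < m" for i j
  proof (cases "i = j")
    case True
    then show ?thesis using ent[of i j m] that Dc a0 by (simp add: imul_unit_jj mult_unit imul_m sum_unit_r sum_unit_l)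
  next
    case False
    then show ?thesis using ent[of i j m] that Dc by (simp add: imul_unit_ij mult_zero_v imul_m sum_unit_r sum_unit_l)
  qed
  show ?thesis unfolding skb_def
  proof (intro conjI allI impI)
    fix i j assume i: "i < Suc m" and j: "j < Suc m"
    consider "i = m" | "j = m" | "i < m" "j < m" using i j by linarith
    then show "D $$ (j,i) = - D $$ (i,j)"
    proof cases
      case 1 then show ?thesis using a0 a1 a2 j by (cases "j = m") auto
    next
      case 2 then show ?thesis using a0 a1 a2 i by (cases "i = m") auto
    next
      case 3 then show ?thesis using G4m[of i j] by (simp add: eq_neg_iff_add_eq_0)
    qed
  next
    fix j assume "j < Suc m"
    then have "j < m \<or> j = m" by auto
    then show "D $$ (m,j) = 0" "D $$ (j,m) = 0" using a0 a1 a2 by auto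
  qed
qed

lemma der_suff:
  fixes D :: "'a::field mat"
  assumes Dc: "D \<in> carrier_mat (Suc m) (Suc m)" and sk: "skb m D"
  shows "is_der (Suc m) D"
proof -
  note lc = conjunct2[OF sk[unfolded skb_def], rule_format]
  have Dv_lt: "(D *\<^sub>v v) $ k = (\<Sum>l<m. D $$ (k,l) * v $ l)" if k: "k < m" and v: "v \<in> carrier_vec (Suc m)" for k v
  proof -
    have "(D *\<^sub>v v) $ k = (\<Sum>l<Suc m. D $$ (k,l) * v $ l)"
      using Dc k v by (simp add: scalar_prod_def atLeast0LessThan)
    also have "\<dots> = (\<Sum>l<m. D $$ (k,l) * v $ l)" using lc[of k] k by simp
    finally show ?thesis .
  qed
  have Dv_m: "(D *\<^sub>v v) $ m = 0" if v: "v \<in> carrier_vec (Suc m)" for v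
  proof -
    have "(D *\<^sub>v v) $ m = (\<Sum>l<Suc m. D $$ (m,l) * v $ l)"
      using Dc v by (simp add: scalar_prod_def atLeast0LessThan)
    also have "\<dots> = 0" using lc by simp
    finally show ?thesis .
  qed
  note skw = conjunct1[OF sk[unfolded skb_def], rule_format]
  have DT: "transpose_mat D = - D"
  proof (intro eq_matI)
    fix i j assume "i < dim_row (- D)" "j < dim_col (- D)"
    then show "transpose_mat D $$ (i,j) = (- D) $$ (i,j)" using Dc skw[of i j] by simp
  qed (use Dc in auto)
  have hom: "D *\<^sub>v imul (Suc m) x y = imul (Suc m) (D *\<^sub>v x) y + imul (Suc m) x (D *\<^sub>v y)"
    if x: "x \<in> carrier_vec (Suc m)" and y: "y \<in> carrier_vec (Suc m)" for x y
  proof (intro eq_vecI)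
    have ic: "imul (Suc m) x y \<in> carrier_vec (Suc m)" by (rule imul_carrier)
    have Dxc: "D *\<^sub>v x \<in> carrier_vec (Suc m)" "D *\<^sub>v y \<in> carrier_vec (Suc m)" using Dc x y by auto
    fix k assume "k < dim_vec (imul (Suc m) (D *\<^sub>v x) y + imul (Suc m) x (D *\<^sub>v y))"
    then have "k < m \<or> k = m" by (auto simp: dim_imul)
    then show "(D *\<^sub>v imul (Suc m) x y) $ k = (imul (Suc m) (D *\<^sub>v x) y + imul (Suc m) x (D *\<^sub>v y)) $ k"
    proof
      assume k: "k < m"
      have "(D *\<^sub>v imul (Suc m) x y) $ k = (\<Sum>l<m. D $$ (k,l) * (x $ m * y $ l))"
        using Dv_lt[OF k ic] by (simp add: imul_lt)
      also have "\<dots> = x $ m * (\<Sum>l<m. D $$ (k,l) * y $ l)"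
        by (simp add: sum_distrib_left ac_simps)
      also have "\<dots> = (imul (Suc m) (D *\<^sub>v x) y + imul (Suc m) x (D *\<^sub>v y)) $ k"
        using Dv_lt[OF k y] Dv_m[OF x] k by (simp add: imul_lt dim_imul)
      finally show ?thesis .
    next
      assume k: "k = m"
      have sp: "(D *\<^sub>v x) \<bullet> y = - (x \<bullet> (D *\<^sub>v y))"
      proof -
        have "x \<bullet> (D *\<^sub>v y) = (transpose_mat D *\<^sub>v x) \<bullet> y"
          using transpose_vec_mult_scalar[OF Dc y x] by simp
        also have "transpose_mat D *\<^sub>v x = - (D *\<^sub>v x)" unfolding DT using Dc x by (intro uminus_mult_mat_vec) auto
        also have "(- (D *\<^sub>v x)) \<bullet> y = - ((D *\<^sub>v x) \<bullet> y)" using Dc x y by (intro scalar_prod_uminus_left) auto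
        finally show ?thesis by simp
      qed
      have "(imul (Suc m) (D *\<^sub>v x) y + imul (Suc m) x (D *\<^sub>v y)) $ m
          = imul (Suc m) (D *\<^sub>v x) y $ m + imul (Suc m) x (D *\<^sub>v y) $ m" by (simp add: dim_imul)
      also have "\<dots> = 0"
        using imul_m_gen[OF Dxc(1) y] imul_m_gen[OF x Dxc(2)] sp Dv_m[OF x] Dv_m[OF y] by simp
      finally show ?thesis using k Dv_m[OF ic] by simp
    qed
  qed (use Dc in \<open>simp add: dim_imul\<close>)
  show ?thesis unfolding is_der_def using Dc hom by blast
qed

definition phi :: "nat \<Rightarrow> 'a::field mat \<Rightarrow> 'a mat" where
  "phi m A = mat m m (\<lambda>(i,j). A $$ (i,j))"

definition psiA :: "nat \<Rightarrow> 'a::field mat \<Rightarrow> 'a mat" where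
  "psiA m Q = mat (Suc m) (Suc m) (\<lambda>(i,j). if i < m \<and> j < m then Q $$ (i,j) else if i = j then 1 else 0)"

definition psiD :: "nat \<Rightarrow> 'a::field mat \<Rightarrow> 'a mat" where
  "psiD m Q = mat (Suc m) (Suc m) (\<lambda>(i,j). if i < m \<and> j < m then Q $$ (i,j) else 0)"

lemma phi_carrier: "phi m A \<in> carrier_mat m m"
  by (simp add: phi_def)

lemma phi_index: "i < m \<Longrightarrow> j < m \<Longrightarrow> phi m A $$ (i,j) = A $$ (i,j)"
  by (simp add: phi_def)

lemma phi_mult:
  fixes A B :: "'a::field mat"
  assumes Ac: "A \<in> carrier_mat (Suc m) (Suc m)" and Bc: "B \<in> carrier_mat (Suc m) (Suc m)"
    and z: "\<And>i. i < m \<Longrightarrow> A $$ (i,m) = 0"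
  shows "phi m (A * B) = phi m A * phi m B"
proof (intro eq_matI)
  fix i j assume i: "i < dim_row (phi m A * phi m B)" and j: "j < dim_col (phi m A * phi m B)"
  then have i': "i < m" and j': "j < m" by (auto simp: phi_def)
  have "phi m (A * B) $$ (i,j) = (\<Sum>k<Suc m. A $$ (i,k) * B $$ (k,j))"
    using Ac Bc i' j' by (simp add: phi_def scalar_prod_def atLeast0LessThan)
  also have "\<dots> = (\<Sum>k<m. A $$ (i,k) * B $$ (k,j))" using z[OF i'] by simp
  also have "\<dots> = (phi m A * phi m B) $$ (i,j)"
    using i' j' by (simp add: phi_def scalar_prod_def atLeast0LessThan)
  finally show "phi m (A * B) $$ (i,j) = (phi m A * phi m B) $$ (i,j)" .
qed (auto simp: phi_def)

lemma aut_iff: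
  fixes A :: "'a::field mat"
  assumes two: "(2::'a) \<noteq> 0" and m: "0 < m"
  shows "is_aut (Suc m) A \<longleftrightarrow> A \<in> carrier_mat (Suc m) (Suc m) \<and> orthc (Suc m) A \<and> blk m A"
proof
  assume h: "is_aut (Suc m) A"
  show "A \<in> carrier_mat (Suc m) (Suc m) \<and> orthc (Suc m) A \<and> blk m A"
    using is_aut_def[THEN iffD1, OF h, THEN conjunct1] aut_nec[OF two m h] by (rule conjI)
next
  assume h: "A \<in> carrier_mat (Suc m) (Suc m) \<and> orthc (Suc m) A \<and> blk m A"
  show "is_aut (Suc m) A" using h aut_suff by blast
qed

lemma phi_orth:
  fixes A :: "'a::field mat"
  assumes Ac: "A \<in> carrier_mat (Suc m) (Suc m)" and o: "orthc (Suc m) A" and b: "blk m A"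
  shows "phi m A \<in> carrier (orth_group m)"
proof -
  have "orthc m (phi m A)" unfolding orthc_def
  proof (intro allI impI)
    fix i j assume i: "i < m" and j: "j < m"
    have "(\<Sum>k<m. phi m A $$ (k,i) * phi m A $$ (k,j)) = (\<Sum>k<m. A $$ (k,i) * A $$ (k,j))"
      using i j by (simp add: phi_def)
    also have "\<dots> = (\<Sum>k<Suc m. A $$ (k,i) * A $$ (k,j))" using b i j by (simp add: blk_def)
    also have "\<dots> = (if i = j then 1 else 0)" using o i j unfolding orthc_def by simp
    finally show "(\<Sum>k<m. phi m A $$ (k,i) * phi m A $$ (k,j)) = (if i = j then 1 else 0)" .
  qed
  then have TA: "transpose_mat (phi m A) * phi m A = 1\<^sub>m m" using orthc_TA[OF phi_carrier] by blast
  have AT: "phi m A * transpose_mat (phi m A) = 1\<^sub>m m"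
    by (rule mat_mult_left_right_inverse[OF _ phi_carrier TA]) (simp add: phi_def)
  show ?thesis using TA AT phi_carrier by (simp add: orth_group_def)
qed

lemma psiA_aut:
  fixes Q :: "'a::field mat"
  assumes Q: "Q \<in> carrier (orth_group m)"
  shows "psiA m Q \<in> carrier_mat (Suc m) (Suc m) \<and> orthc (Suc m) (psiA m Q) \<and> blk m (psiA m Q) \<and> phi m (psiA m Q) = Q"
proof -
  from Q have Qc: "Q \<in> carrier_mat m m" and TQ: "transpose_mat Q * Q = 1\<^sub>m m" by (auto simp: orth_group_def)
  have oQ: "orthc m Q" using orthc_TA[OF Qc] TQ by blast
  have "orthc (Suc m) (psiA m Q)" unfolding orthc_def
  proof (intro allI impI)
    fix i j assume i: "i < Suc m" and j: "j < Suc m"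
    have "(\<Sum>k<Suc m. psiA m Q $$ (k,i) * psiA m Q $$ (k,j)) = (\<Sum>k<m. psiA m Q $$ (k,i) * psiA m Q $$ (k,j)) + psiA m Q $$ (m,i) * psiA m Q $$ (m,j)"
      by simp
    also have "\<dots> = (if i = j then 1 else 0)"
    proof (cases "i < m \<and> j < m")
      case True
      then have "(\<Sum>k<m. psiA m Q $$ (k,i) * psiA m Q $$ (k,j)) = (\<Sum>k<m. Q $$ (k,i) * Q $$ (k,j))"
        by (simp add: psiA_def)
      then show ?thesis using True oQ unfolding orthc_def by (simp add: psiA_def)
    next
      case False
      then have "i = m \<or> j = m" using i j by auto
      then show ?thesis using i j by (auto simp: psiA_def)
    qed
    finally show "(\<Sum>k<Suc m. psiA m Q $$ (k,i) * psiA m Q $$ (k,j)) = (if i = j then 1 else 0)" .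
  qed
  moreover have "phi m (psiA m Q) = Q"
    using Qc by (intro eq_matI) (auto simp: phi_def psiA_def)
  ultimately show ?thesis by (auto simp: psiA_def blk_def)
qed

lemma group_part:
  assumes two: "(2::'a::field) \<noteq> 0" and m: "0 < m"
  shows "(aut_group (Suc m) :: 'a mat monoid) \<cong> (orth_group m :: 'a mat monoid)"
proof -
  let ?G = "aut_group (Suc m) :: 'a mat monoid"
  let ?H = "orth_group m :: 'a mat monoid"
  have car: "carrier ?G = {A. A \<in> carrier_mat (Suc m) (Suc m) \<and> orthc (Suc m) A \<and> blk m A}"
    using aut_iff[OF two m] by (auto simp: aut_group_def)
  have hom: "phi m \<in> hom ?G ?H"
  proof (rule homI)
    fix A :: "'a mat" assume "A \<in> carrier ?G"
    then show "phi m A \<in> carrier ?H" using car phi_orth by auto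
  next
    fix A B :: "'a mat" assume A: "A \<in> carrier ?G" and B: "B \<in> carrier ?G"
    then show "phi m (A \<otimes>\<^bsub>?G\<^esub> B) = phi m A \<otimes>\<^bsub>?H\<^esub> phi m B"
      using car phi_mult[of A m B] by (auto simp: aut_group_def orth_group_def blk_def)
  qed
  have inj: "inj_on (phi m) (carrier ?G)"
  proof (rule inj_onI)
    fix A B :: "'a mat" assume A: "A \<in> carrier ?G" and B: "B \<in> carrier ?G"
      and e: "phi m A = phi m B"
    from A B car have Ac: "A \<in> carrier_mat (Suc m) (Suc m)" and Bc: "B \<in> carrier_mat (Suc m) (Suc m)"
      and bA: "blk m A" and bB: "blk m B" by auto
    show "A = B"
    proof (intro eq_matI)
      fix i j assume i: "i < dim_row B" and j: "j < dim_col B"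
      show "A $$ (i,j) = B $$ (i,j)"
      proof (cases "i < m \<and> j < m")
        case True then show ?thesis using e phi_index by metis
      next
        case False
        then have "i = m \<or> j = m" using i j Bc by auto
        then show ?thesis using bA bB i j Bc unfolding blk_def
          by (metis carrier_matD less_Suc_eq)
      qed
    qed (use Ac Bc in auto)
  qed
  have surj: "phi m ` carrier ?G = carrier ?H"
  proof
    show "phi m ` carrier ?G \<subseteq> carrier ?H"
      using car phi_orth by auto
  next
    show "carrier ?H \<subseteq> phi m ` carrier ?G"
    proof
      fix Q :: "'a mat" assume "Q \<in> carrier ?H"
      from psiA_aut[OF this] show "Q \<in> phi m ` carrier ?G"
        using car by (metis (mono_tags, lifting) image_eqI mem_Collect_eq)
    qed
  qed
  have "phi m \<in> iso ?G ?H"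
    unfolding iso_def bij_betw_def using hom inj surj by auto
  then show ?thesis unfolding is_iso_def by blast
qed

lemma der_iff:
  fixes D :: "'a::field mat"
  assumes two: "(2::'a) \<noteq> 0"
  shows "is_der (Suc m) D \<longleftrightarrow> D \<in> carrier_mat (Suc m) (Suc m) \<and> skb m D"
proof
  assume h: "is_der (Suc m) D"
  show "D \<in> carrier_mat (Suc m) (Suc m) \<and> skb m D"
    using is_der_def[THEN iffD1, OF h, THEN conjunct1] der_nec[OF two h] by (rule conjI)
next
  assume h: "D \<in> carrier_mat (Suc m) (Suc m) \<and> skb m D"
  show "is_der (Suc m) D" by (rule der_suff[OF conjunct1[OF h] conjunct2[OF h]])
qed

lemma phi_add:
  fixes A B :: "'a::field mat"
  assumes "A \<in> carrier_mat (Suc m) (Suc m)" "B \<in> carrier_mat (Suc m) (Suc m)"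
  shows "phi m (A + B) = phi m A + phi m B"
  using assms by (intro eq_matI) (auto simp: phi_def)

lemma phi_minus:
  fixes A B :: "'a::field mat"
  assumes "A \<in> carrier_mat (Suc m) (Suc m)" "B \<in> carrier_mat (Suc m) (Suc m)"
  shows "phi m (A - B) = phi m A - phi m B"
  using assms by (intro eq_matI) (auto simp: phi_def)

lemma phi_smult:
  fixes A :: "'a::field mat"
  assumes "A \<in> carrier_mat (Suc m) (Suc m)"
  shows "phi m (c \<cdot>\<^sub>m A) = c \<cdot>\<^sub>m phi m A"
  using assms by (intro eq_matI) (auto simp: phi_def)

lemma lie_part:
  assumes two: "(2::'a::field) \<noteq> 0"
  shows "lie_isomorphic (der_alg (Suc m) :: 'a mat set) (orth_lie m)"
proof -
  let ?L = "der_alg (Suc m) :: 'a mat set"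
  let ?M = "orth_lie m :: 'a mat set"
  have car: "?L = {D. D \<in> carrier_mat (Suc m) (Suc m) \<and> skb m D}"
    using der_iff[OF two] by (auto simp: der_alg_def)
  have lc: "D $$ (m,j) = 0 \<and> D $$ (j,m) = 0" if "D \<in> ?L" "j < Suc m" for D j
  proof -
    have sk: "skb m D" using that car by auto
    show ?thesis using conjunct2[OF sk[unfolded skb_def], rule_format] that(2) by blast
  qed
  have skw: "D $$ (j,i) = - D $$ (i,j)" if "D \<in> ?L" "i < Suc m" "j < Suc m" for D i j
  proof -
    have sk: "skb m D" using that car by auto
    show ?thesis using conjunct1[OF sk[unfolded skb_def], rule_format] that(2,3) by blast
  qed
  have into: "phi m D \<in> ?M" if D: "D \<in> ?L" for D
  proof -
    have "transpose_mat (phi m D) = - phi m D"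
    proof (intro eq_matI)
      fix i j assume "i < dim_row (- phi m D)" "j < dim_col (- phi m D)"
      then have i: "i < m" and j: "j < m" by (auto simp: phi_def)
      show "transpose_mat (phi m D) $$ (i,j) = (- phi m D) $$ (i,j)"
        using i j skw[OF D, of i j] by (simp add: phi_def)
    qed (auto simp: phi_def)
    then show ?thesis by (simp add: orth_lie_def phi_carrier)
  qed
  have Lc: "D \<in> carrier_mat (Suc m) (Suc m)" if "D \<in> ?L" for D using that car by auto
  have inj: "inj_on (phi m) ?L"
  proof (rule inj_onI)
    fix A B :: "'a mat" assume A: "A \<in> ?L" and B: "B \<in> ?L" and e: "phi m A = phi m B"
    show "A = B"
    proof (intro eq_matI)
      fix i j assume i: "i < dim_row B" and j: "j < dim_col B"
      have i': "i < Suc m" and j': "j < Suc m" using i j Lc[OF B] by auto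
      show "A $$ (i,j) = B $$ (i,j)"
      proof (cases "i < m \<and> j < m")
        case True then show ?thesis using e phi_index by metis
      next
        case False
        then have "i = m \<or> j = m" using i' j' by auto
        then show ?thesis using lc[OF A] lc[OF B] i' j' by auto
      qed
    qed (use Lc[OF A] Lc[OF B] in auto)
  qed
  have surj: "phi m ` ?L = ?M"
  proof
    show "phi m ` ?L \<subseteq> ?M" using into by auto
  next
    show "?M \<subseteq> phi m ` ?L"
    proof
      fix Q :: "'a mat" assume Q: "Q \<in> ?M"
      then have Qc: "Q \<in> carrier_mat m m" and QT: "transpose_mat Q = - Q" by (auto simp: orth_lie_def)
      have Qs: "Q $$ (j,i) = - Q $$ (i,j)" if "i < m" "j < m" for i j
      proof -
        have "transpose_mat Q $$ (i,j) = (- Q) $$ (i,j)" using QT by simp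
        then show ?thesis using Qc that by simp
      qed
      have "skb m (psiD m Q)" unfolding skb_def
      proof (intro conjI allI impI)
        fix i j assume i: "i < Suc m" and j: "j < Suc m"
        show "psiD m Q $$ (j,i) = - psiD m Q $$ (i,j)"
          using i j Qs[of i j] by (simp add: psiD_def)
      next
        fix j assume "j < Suc m"
        then show "psiD m Q $$ (m,j) = 0" "psiD m Q $$ (j,m) = 0" by (simp_all add: psiD_def)
      qed
      moreover have "psiD m Q \<in> carrier_mat (Suc m) (Suc m)" by (simp add: psiD_def)
      ultimately have "psiD m Q \<in> ?L" using car by blast
      moreover have "phi m (psiD m Q) = Q"
        using Qc by (intro eq_matI) (auto simp: phi_def psiD_def)
      ultimately show "Q \<in> phi m ` ?L" by (metis image_eqI)
    qed
  qed
  have ops: "\<forall>A \<in> ?L. \<forall>B \<in> ?L. phi m (A + B) = phi m A + phi m B \<and>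
       phi m (lie_bracket A B) = lie_bracket (phi m A) (phi m B)"
  proof (intro ballI conjI)
    fix A B assume A: "A \<in> ?L" and B: "B \<in> ?L"
    show "phi m (A + B) = phi m A + phi m B" using phi_add Lc[OF A] Lc[OF B] by blast
    have zA: "\<And>i. i < m \<Longrightarrow> A $$ (i,m) = 0" using lc[OF A] by auto
    have zB: "\<And>i. i < m \<Longrightarrow> B $$ (i,m) = 0" using lc[OF B] by auto
    have "phi m (A * B - B * A) = phi m (A * B) - phi m (B * A)"
      using Lc[OF A] Lc[OF B] by (intro phi_minus) auto
    also have "\<dots> = phi m A * phi m B - phi m B * phi m A"
      using phi_mult[OF Lc[OF A] Lc[OF B] zA] phi_mult[OF Lc[OF B] Lc[OF A] zB] by simp
    finally show "phi m (lie_bracket A B) = lie_bracket (phi m A) (phi m B)"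
      by (simp add: lie_bracket_def)
  qed
  have sc: "\<forall>c. \<forall>A \<in> ?L. phi m (c \<cdot>\<^sub>m A) = c \<cdot>\<^sub>m phi m A"
    using phi_smult Lc by blast
  have "bij_betw (phi m) ?L ?M" unfolding bij_betw_def using inj surj by blast
  then show ?thesis unfolding lie_isomorphic_def using ops sc by (intro exI[of _ "phi m"]) blast
qed

theorem theorem1:
  fixes n :: nat
  assumes "(2::'a::field) \<noteq> 0" and "n > 1"
  shows "(aut_group n :: 'a mat monoid) \<cong> (orth_group (n - 1) :: 'a mat monoid)
         \<and> lie_isomorphic (der_alg n :: 'a mat set) (orth_lie (n - 1))"
proof -
  define m where "m = n - 1"
  have n: "n = Suc m" and m: "0 < m" using assms(2) unfolding m_def by arith+
  show ?thesis using group_part[OF assms(1) m] lie_part[OF assms(1), of m] n by simp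
qed

end
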